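(* Let $(V,\tau)$ be a topological mixed lattice space. Then: (a) the cones $V_p$ and $V_{sp}$ are both closed if and only if $\tau$ is Hausdorff; (b) if $\tau$ is Hausdorff then $V$ is $(\le)$-Archimedean; (c) if $\tau$ is Hausdorff and $(x_n)$ is a $(\le)$-increasing (resp. $(\preccurlyeq)$-increasing) sequence converging to $x$ in $\tau$, then $x$ is the supremum of $\{x_n\}$ with respect to $\le$ (resp. with respect to $\preccurlyeq$); (d) if $\tau$ is locally mixed-full and $A$ is a bounded set, then $MF_1(A)$ and $MF_2(A)$ are bounded; (e) if $\tau$ is locally mixed-full then every mixed-order interval is bounded; in particular every $(\preccurlyeq)$-order interval $\{z: x\preccurlyeq z\preccurlyeq y\}$ is bounded; (f) if $S$ is a mixed lattice subspace of $V$, then its closure $\overline{S}$ is a mixed lattice subspace; (g) the closure of a quasi-ideal is a quasi-ideal, and the closure of a specific ideal is a specific ideal.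
   Context: A mixed lattice vector space $(V,\le,\preccurlyeq)$ is a real vector space $V$ with two partial orderings $\le$ (initial order) and $\preccurlyeq$ (specific order), each making $V$ a partially ordered vector space, with positive cones $V_p=\{x:0\le x\}$, $V_{sp}=\{x:0\preccurlyeq x\}$, such that: (1) for all $x,y$ the elements $x\curlyvee y=\min\{w: w\succcurlyeq x,\ w\ge y\}$ and $x\curlywedge y=\max\{w: w\preccurlyeq x,\ w\le y\}$ exist (min/max with respect to $\le$); (2) $x\preccurlyeq y$ implies $x\le y$; (3) $x\curlyvee y, x\curlywedge y\in V_{sp}$ whenever $x,y\in V_{sp}$. A topological mixed lattice space is such a $V$ with a vector topology $\tau$ making $(x,y)\mapsto x\curlyvee y$ and $(x,y)\mapsto x\curlywedge y$ continuous $V\times V\to V$. $\tau$ is locally mixed-full if every neighborhood of zero contains a neighborhood $W$ of zero with ($y\in W$, $0\preccurlyeq x\le y$) $\Rightarrow x\in W$. $MF_1(A)=\{y: x\preccurlyeq y\le z\text{ for some }x,z\in A\}$, $MF_2(A)=\{y: x\le y\preccurlyeq z\text{ for some }x,z\in A\}$. $V$ is $(\le)$-Archimedean if $nx\le y$ for all $n\in\mathbb N$ implies $x\le 0$. A sequence is $(\le)$-increasing if $x_n\le x_m$ for $n\le m$ (similarly $(\preccurlyeq)$-increasing). Mixed-order intervals are sets $\{x: z\preccurlyeq x\le y\}$ and $\{x: z\le x\preccurlyeq y\}$. A mixed lattice subspace is a linear subspace closed under $\curlyvee$ and $\curlywedge$. A quasi-ideal is a mixed lattice subspace $A$ such that $x\in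 A$ and $0\preccurlyeq y\le x$ imply $y\in A$. A specific ideal is a mixed lattice subspace $A$ such that $x\in A$ and $0\preccurlyeq y\preccurlyeq x$ imply $y\in A$. *)

theory Defs
  imports "HOL-Analysis.Analysis"
begin

definition ordered_vs :: "('a::real_vector \<Rightarrow> 'a \<Rightarrow> bool) \<Rightarrow> bool" where
  "ordered_vs r \<longleftrightarrow>
     (\<forall>x. r x x) \<and> (\<forall>x y. r x y \<and> r y x \<longrightarrow> x = y) \<and>
     (\<forall>x y z. r x y \<and> r y z \<longrightarrow> r x z) \<and>
     (\<forall>x y z. r x y \<longrightarrow> r (x + z) (y + z)) \<and>
     (\<forall>x y c. r x y \<and> 0 \<le> c \<longrightarrow> r (c *\<^sub>R x) (c *\<^sub>R y))"

definition is_least_wrt :: "('a \<Rightarrow> 'a \<Rightarrow> bool) \<Rightarrow> 'a set \<Rightarrow> 'a \<Rightarrow> bool" where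
  "is_least_wrt r S w \<longleftrightarrow> w \<in> S \<and> (\<forall>v\<in>S. r w v)"

definition is_greatest_wrt :: "('a \<Rightarrow> 'a \<Rightarrow> bool) \<Rightarrow> 'a set \<Rightarrow> 'a \<Rightarrow> bool" where
  "is_greatest_wrt r S w \<longleftrightarrow> w \<in> S \<and> (\<forall>v\<in>S. r v w)"

definition is_sup_wrt :: "('a \<Rightarrow> 'a \<Rightarrow> bool) \<Rightarrow> 'a set \<Rightarrow> 'a \<Rightarrow> bool" where
  "is_sup_wrt r S x \<longleftrightarrow> is_least_wrt r {u. \<forall>s\<in>S. r s u} x"

text \<open>Mixed upper and lower envelopes: le is the initial order, sle the specific order.\<close>
definition mixed_sup :: "('a \<Rightarrow> 'a \<Rightarrow> bool) \<Rightarrow> ('a \<Rightarrow> 'a \<Rightarrow> bool) \<Rightarrow> 'a \<Rightarrow> 'a \<Rightarrow> 'a" where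
  "mixed_sup le sle x y = (THE w. is_least_wrt le {w. sle x w \<and> le y w} w)"

definition mixed_inf :: "('a \<Rightarrow> 'a \<Rightarrow> bool) \<Rightarrow> ('a \<Rightarrow> 'a \<Rightarrow> bool) \<Rightarrow> 'a \<Rightarrow> 'a \<Rightarrow> 'a" where
  "mixed_inf le sle x y = (THE w. is_greatest_wrt le {w. sle w x \<and> le w y} w)"

definition mixed_lattice_vs :: "('a::real_vector \<Rightarrow> 'a \<Rightarrow> bool) \<Rightarrow> ('a \<Rightarrow> 'a \<Rightarrow> bool) \<Rightarrow> bool" where
  "mixed_lattice_vs le sle \<longleftrightarrow>
     ordered_vs le \<and> ordered_vs sle \<and>
     (\<forall>x y. \<exists>w. is_least_wrt le {w. sle x w \<and> le y w} w) \<and>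
     (\<forall>x y. \<exists>w. is_greatest_wrt le {w. sle w x \<and> le w y} w) \<and>
     (\<forall>x y. sle x y \<longrightarrow> le x y) \<and>
     (\<forall>x y. sle 0 x \<and> sle 0 y \<longrightarrow> sle 0 (mixed_sup le sle x y) \<and> sle 0 (mixed_inf le sle x y))"

definition vector_topology :: "'a::real_vector topology \<Rightarrow> bool" where
  "vector_topology T \<longleftrightarrow> topspace T = UNIV \<and>
     continuous_map (prod_topology T T) T (\<lambda>(x, y). x + y) \<and>
     continuous_map (prod_topology euclideanreal T) T (\<lambda>(c, x). c *\<^sub>R x)"

definition top_mixed_lattice_space ::
  "('a::real_vector \<Rightarrow> 'a \<Rightarrow> bool) \<Rightarrow> ('a \<Rightarrow> 'a \<Rightarrow> bool) \<Rightarrow> 'a topology \<Rightarrow> bool" where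
  "top_mixed_lattice_space le sle T \<longleftrightarrow>
     mixed_lattice_vs le sle \<and> vector_topology T \<and>
     continuous_map (prod_topology T T) T (\<lambda>(x, y). mixed_sup le sle x y) \<and>
     continuous_map (prod_topology T T) T (\<lambda>(x, y). mixed_inf le sle x y)"

definition nbhd_of :: "'a topology \<Rightarrow> 'a \<Rightarrow> 'a set \<Rightarrow> bool" where
  "nbhd_of T x N \<longleftrightarrow> (\<exists>U. openin T U \<and> x \<in> U \<and> U \<subseteq> N)"

definition locally_mixed_full ::
  "('a::real_vector \<Rightarrow> 'a \<Rightarrow> bool) \<Rightarrow> ('a \<Rightarrow> 'a \<Rightarrow> bool) \<Rightarrow> 'a topology \<Rightarrow> bool" where
  "locally_mixed_full le sle T \<longleftrightarrow>
     (\<forall>N. nbhd_of T 0 N \<longrightarrow>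
        (\<exists>W. nbhd_of T 0 W \<and> W \<subseteq> N \<and> (\<forall>x y. y \<in> W \<and> sle 0 x \<and> le x y \<longrightarrow> x \<in> W)))"

definition tvs_bounded :: "'a::real_vector topology \<Rightarrow> 'a set \<Rightarrow> bool" where
  "tvs_bounded T A \<longleftrightarrow>
     (\<forall>N. nbhd_of T 0 N \<longrightarrow> (\<exists>c>0. A \<subseteq> (\<lambda>x. c *\<^sub>R x) ` N))"

definition MF1 :: "('a \<Rightarrow> 'a \<Rightarrow> bool) \<Rightarrow> ('a \<Rightarrow> 'a \<Rightarrow> bool) \<Rightarrow> 'a set \<Rightarrow> 'a set" where
  "MF1 le sle A = {y. \<exists>x\<in>A. \<exists>z\<in>A. sle x y \<and> le y z}"

definition MF2 :: "('a \<Rightarrow> 'a \<Rightarrow> bool) \<Rightarrow> ('a \<Rightarrow> 'a \<Rightarrow> bool) \<Rightarrow> 'a set \<Rightarrow> 'a set" where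
  "MF2 le sle A = {y. \<exists>x\<in>A. \<exists>z\<in>A. le x y \<and> sle y z}"

definition archimedean_wrt :: "('a::real_vector \<Rightarrow> 'a \<Rightarrow> bool) \<Rightarrow> bool" where
  "archimedean_wrt le \<longleftrightarrow> (\<forall>x y. (\<forall>n::nat. n \<ge> 1 \<longrightarrow> le (real n *\<^sub>R x) y) \<longrightarrow> le x 0)"

definition mixed_lattice_subspace ::
  "('a::real_vector \<Rightarrow> 'a \<Rightarrow> bool) \<Rightarrow> ('a \<Rightarrow> 'a \<Rightarrow> bool) \<Rightarrow> 'a set \<Rightarrow> bool" where
  "mixed_lattice_subspace le sle S \<longleftrightarrow> subspace S \<and>
     (\<forall>x\<in>S. \<forall>y\<in>S. mixed_sup le sle x y \<in> S \<and> mixed_inf le sle x y \<in> S)"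

definition quasi_ideal ::
  "('a::real_vector \<Rightarrow> 'a \<Rightarrow> bool) \<Rightarrow> ('a \<Rightarrow> 'a \<Rightarrow> bool) \<Rightarrow> 'a set \<Rightarrow> bool" where
  "quasi_ideal le sle A \<longleftrightarrow> mixed_lattice_subspace le sle A \<and>
     (\<forall>x y. x \<in> A \<and> sle 0 y \<and> le y x \<longrightarrow> y \<in> A)"

definition specific_ideal ::
  "('a::real_vector \<Rightarrow> 'a \<Rightarrow> bool) \<Rightarrow> ('a \<Rightarrow> 'a \<Rightarrow> bool) \<Rightarrow> 'a set \<Rightarrow> bool" where
  "specific_ideal le sle A \<longleftrightarrow> mixed_lattice_subspace le sle A \<and>
     (\<forall>x y. x \<in> A \<and> sle 0 y \<and> sle y x \<longrightarrow> y \<in> A)"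

end

theory Submission
  imports Defs
begin

lemma ov_refl: "ordered_vs r \<Longrightarrow> r x x" unfolding ordered_vs_def by blast
lemma ov_antisym: "ordered_vs r \<Longrightarrow> r x y \<Longrightarrow> r y x \<Longrightarrow> x = y" unfolding ordered_vs_def by blast
lemma ov_trans: "ordered_vs r \<Longrightarrow> r x y \<Longrightarrow> r y z \<Longrightarrow> r x z" unfolding ordered_vs_def by blast
lemma ov_add: "ordered_vs r \<Longrightarrow> r x y \<Longrightarrow> r (x + z) (y + z)" unfolding ordered_vs_def by blast
lemma ov_scale: "ordered_vs r \<Longrightarrow> r x y \<Longrightarrow> 0 \<le> c \<Longrightarrow> r (c *\<^sub>R x) (c *\<^sub>R y)" unfolding ordered_vs_def by blast
lemma ov_sub: assumes o: "ordered_vs r" shows "r x y \<longleftrightarrow> r 0 (y - x)"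
proof
  assume h: "r x y"
  from ov_add[OF o h, of "-x"] show "r 0 (y - x)" by simp
next
  assume h: "r 0 (y - x)"
  from ov_add[OF o h, of "x"] show "r x y" by simp
qed

lemma ml_le: "mixed_lattice_vs le sle \<Longrightarrow> ordered_vs le" unfolding mixed_lattice_vs_def by blast
lemma ml_sle: "mixed_lattice_vs le sle \<Longrightarrow> ordered_vs sle" unfolding mixed_lattice_vs_def by blast
lemma ml_sle_le: "mixed_lattice_vs le sle \<Longrightarrow> sle x y \<Longrightarrow> le x y" unfolding mixed_lattice_vs_def by blast
lemma ml_ax3: "mixed_lattice_vs le sle \<Longrightarrow> sle 0 x \<Longrightarrow> sle 0 y \<Longrightarrow>
   sle 0 (mixed_sup le sle x y) \<and> sle 0 (mixed_inf le sle x y)" unfolding mixed_lattice_vs_def by blast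

lemma ml_sup:
  assumes m: "mixed_lattice_vs le sle"
  shows "is_least_wrt le {w. sle x w \<and> le y w} (mixed_sup le sle x y)"
proof -
  obtain w where w: "is_least_wrt le {w. sle x w \<and> le y w} w" using m unfolding mixed_lattice_vs_def by blast
  have u: "\<And>v. is_least_wrt le {w. sle x w \<and> le y w} v \<Longrightarrow> v = w"
    using w ov_antisym[OF ml_le[OF m]] unfolding is_least_wrt_def by blast
  show ?thesis unfolding mixed_sup_def using w u by (rule theI)
qed

lemma ml_inf:
  assumes m: "mixed_lattice_vs le sle"
  shows "is_greatest_wrt le {w. sle w x \<and> le w y} (mixed_inf le sle x y)"
proof -
  obtain w where w: "is_greatest_wrt le {w. sle w x \<and> le w y} w" using m unfolding mixed_lattice_vs_def by blast
  have u: "\<And>v. is_greatest_wrt le {w. sle w x \<and> le w y} v \<Longrightarrow> v = w"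
    using w ov_antisym[OF ml_le[OF m]] unfolding is_greatest_wrt_def by blast
  show ?thesis unfolding mixed_inf_def using w u by (rule theI)
qed

lemma ml_sup_props:
  assumes m: "mixed_lattice_vs le sle"
  shows "sle x (mixed_sup le sle x y)" "le y (mixed_sup le sle x y)"
    "\<And>w. sle x w \<Longrightarrow> le y w \<Longrightarrow> le (mixed_sup le sle x y) w"
  using ml_sup[OF m, of x y] unfolding is_least_wrt_def by auto

lemma ml_inf_props:
  assumes m: "mixed_lattice_vs le sle"
  shows "sle (mixed_inf le sle x y) x" "le (mixed_inf le sle x y) y"
    "\<And>w. sle w x \<Longrightarrow> le w y \<Longrightarrow> le w (mixed_inf le sle x y)"
  using ml_inf[OF m, of x y] unfolding is_greatest_wrt_def by auto

section \<open>Vector topology basics\<close>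

lemma cmap_ident: "continuous_map X X (\<lambda>x. x)"
  using continuous_map_id[of X] by (simp add: id_def)


lemma vt_top: "vector_topology T \<Longrightarrow> topspace T = UNIV" by (simp add: vector_topology_def)

lemma vt_add:
  assumes vt: "vector_topology T" and f: "continuous_map X T f" and g: "continuous_map X T g"
  shows "continuous_map X T (\<lambda>x. f x + g x)"
proof -
  have "continuous_map (prod_topology T T) T (\<lambda>(x, y). x + y)" using vt by (simp add: vector_topology_def)
  from continuous_map_compose[OF continuous_map_pairedI[OF f g] this] show ?thesis by (simp add: o_def)
qed

lemma vt_scale:
  assumes vt: "vector_topology T" and f: "continuous_map X euclideanreal f" and g: "continuous_map X T g"
  shows "continuous_map X T (\<lambda>x. f x *\<^sub>R g x)"
proof -
  have "continuous_map (prod_topology euclideanreal T) T (\<lambda>(c, x). c *\<^sub>R x)" using vt by (simp add: vector_topology_def)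
  from continuous_map_compose[OF continuous_map_pairedI[OF f g] this] show ?thesis by (simp add: o_def)
qed

lemma vt_const: "vector_topology T \<Longrightarrow> continuous_map X T (\<lambda>x. c)"
  by (simp add: vt_top)

lemma vt_diff:
  assumes vt: "vector_topology T" and f: "continuous_map X T f" and g: "continuous_map X T g"
  shows "continuous_map X T (\<lambda>x. f x - g x)"
proof -
  have "continuous_map X T (\<lambda>x. f x + (-1) *\<^sub>R g x)"
    by (intro vt_add[OF vt f] vt_scale[OF vt _ g]) simp
  then show ?thesis by simp
qed

lemma vt_open_preimage:
  assumes vt: "vector_topology T" and f: "continuous_map T T f" and U: "openin T U"
  shows "openin T {x. f x \<in> U}"
  using openin_continuous_map_preimage[OF f U] by (simp add: vt_top[OF vt])

lemma vt_pair_nbhd: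
  assumes vt: "vector_topology T" and g: "continuous_map (prod_topology T T) T g"
    and U: "openin T U" and g0: "g (0,0) \<in> U"
  shows "\<exists>V. openin T V \<and> 0 \<in> V \<and> (\<forall>a\<in>V. \<forall>b\<in>V. g (a,b) \<in> U)"
proof -
  have "openin (prod_topology T T) {p \<in> topspace (prod_topology T T). g p \<in> U}"
    by (rule openin_continuous_map_preimage[OF g U])
  then have o: "openin (prod_topology T T) {p. g p \<in> U}" by (simp add: vt_top[OF vt])
  have "(0,0) \<in> {p. g p \<in> U}" using g0 by simp
  then obtain U1 U2 where u: "openin T U1" "openin T U2" "0 \<in> U1" "0 \<in> U2" "U1 \<times> U2 \<subseteq> {p. g p \<in> U}"
    using o unfolding openin_prod_topology_alt by meson
  have "openin T (U1 \<inter> U2)" using u by (simp add: openin_Int)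
  moreover have "\<forall>a\<in>U1 \<inter> U2. \<forall>b\<in>U1 \<inter> U2. g (a,b) \<in> U" using u(5) by blast
  ultimately show ?thesis using u(3,4) by blast
qed

lemma vt_add_nbhd:
  assumes vt: "vector_topology T" and U: "openin T U" and "0 \<in> U"
  shows "\<exists>V. openin T V \<and> 0 \<in> V \<and> (\<forall>a\<in>V. \<forall>b\<in>V. a + b \<in> U)"
proof -
  have "continuous_map (prod_topology T T) T (\<lambda>p. fst p + snd p)"
    by (intro vt_add[OF vt] continuous_map_fst continuous_map_snd)
  from vt_pair_nbhd[OF vt this U] assms(3) show ?thesis by simp
qed

lemma vt_diff_nbhd:
  assumes vt: "vector_topology T" and U: "openin T U" and "0 \<in> U"
  shows "\<exists>V. openin T V \<and> 0 \<in> V \<and> (\<forall>a\<in>V. \<forall>b\<in>V. a - b \<in> U)"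
proof -
  have "continuous_map (prod_topology T T) T (\<lambda>p. fst p - snd p)"
    by (intro vt_diff[OF vt] continuous_map_fst continuous_map_snd)
  from vt_pair_nbhd[OF vt this U] assms(3) show ?thesis by simp
qed

lemma vt_scale_small:
  assumes vt: "vector_topology T" and U: "openin T U" and "0 \<in> U"
  shows "\<exists>d>0. \<forall>t. \<bar>t\<bar> < d \<longrightarrow> t *\<^sub>R p \<in> U"
proof -
  have c: "continuous_map euclideanreal T (\<lambda>t. t *\<^sub>R p)"
    by (intro vt_scale[OF vt] cmap_ident vt_const[OF vt])
  have "openin euclideanreal {t \<in> topspace euclideanreal. t *\<^sub>R p \<in> U}"
    by (rule openin_continuous_map_preimage[OF c U])
  then have "open {t. t *\<^sub>R p \<in> U}" by simp
  moreover have "0 \<in> {t. t *\<^sub>R p \<in> U}" using assms(3) by simp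
  ultimately obtain d where "d > 0" "\<forall>y. dist y 0 < d \<longrightarrow> y \<in> {t. t *\<^sub>R p \<in> U}"
    unfolding open_dist by blast
  then show ?thesis by (intro exI[of _ d]) auto
qed


section \<open>Closures\<close>

lemma cl_inv1:
  assumes f: "continuous_map T T f" and S: "\<forall>a\<in>S. f a \<in> S" and x: "x \<in> T closure_of S"
  shows "f x \<in> T closure_of S"
proof -
  have "f x \<in> T closure_of (f ` S)" using continuous_map_image_closure_subset[OF f] x by blast
  moreover have "T closure_of (f ` S) \<subseteq> T closure_of S" using S by (intro closure_of_mono) blast
  ultimately show ?thesis by blast
qed

lemma cl_inv2:
  assumes g: "continuous_map (prod_topology T T) T g" and S: "\<forall>a\<in>S. \<forall>b\<in>S. g (a,b) \<in> S"
    and x: "x \<in> T closure_of S" and y: "y \<in> T closure_of S"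
  shows "g (x,y) \<in> T closure_of S"
proof -
  have "(x,y) \<in> prod_topology T T closure_of (S \<times> S)" using x y by (simp add: closure_of_Times)
  then have "g (x,y) \<in> T closure_of (g ` (S \<times> S))" using continuous_map_image_closure_subset[OF g] by blast
  moreover have "T closure_of (g ` (S \<times> S)) \<subseteq> T closure_of S" using S by (intro closure_of_mono) blast
  ultimately show ?thesis by blast
qed

lemma tm_ml: "top_mixed_lattice_space le sle T \<Longrightarrow> mixed_lattice_vs le sle"
  by (simp add: top_mixed_lattice_space_def)
lemma tm_vt: "top_mixed_lattice_space le sle T \<Longrightarrow> vector_topology T"
  by (simp add: top_mixed_lattice_space_def)

lemma tm_sup:
  assumes tm: "top_mixed_lattice_space le sle T" and f: "continuous_map X T f" and g: "continuous_map X T g"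
  shows "continuous_map X T (\<lambda>x. mixed_sup le sle (f x) (g x))"
proof -
  have "continuous_map (prod_topology T T) T (\<lambda>(x, y). mixed_sup le sle x y)" using tm by (simp add: top_mixed_lattice_space_def)
  from continuous_map_compose[OF continuous_map_pairedI[OF f g] this] show ?thesis by (simp add: o_def)
qed

lemma tm_inf:
  assumes tm: "top_mixed_lattice_space le sle T" and f: "continuous_map X T f" and g: "continuous_map X T g"
  shows "continuous_map X T (\<lambda>x. mixed_inf le sle (f x) (g x))"
proof -
  have "continuous_map (prod_topology T T) T (\<lambda>(x, y). mixed_inf le sle x y)" using tm by (simp add: top_mixed_lattice_space_def)
  from continuous_map_compose[OF continuous_map_pairedI[OF f g] this] show ?thesis by (simp add: o_def)
qed

lemma part_f:
  assumes tm: "top_mixed_lattice_space le sle T" and S: "mixed_lattice_subspace le sle S"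
  shows "mixed_lattice_subspace le sle (T closure_of S)"
proof -
  have vt: "vector_topology T" using tm by (rule tm_vt)
  have sub: "subspace S" and cl: "\<forall>x\<in>S. \<forall>y\<in>S. mixed_sup le sle x y \<in> S \<and> mixed_inf le sle x y \<in> S"
    using S by (auto simp: mixed_lattice_subspace_def)
  have c_fst: "continuous_map (prod_topology T T) T fst" and c_snd: "continuous_map (prod_topology T T) T snd"
    by (rule continuous_map_fst continuous_map_snd)+
  have "0 \<in> T closure_of S"
    using closure_of_subset[of S T] sub by (auto simp: vt_top[OF vt] subspace_def)
  moreover have "x + y \<in> T closure_of S" if "x \<in> T closure_of S" "y \<in> T closure_of S" for x y
    using cl_inv2[OF vt_add[OF vt c_fst c_snd] _ that] sub by (simp add: subspace_def)
  moreover have "c *\<^sub>R x \<in> T closure_of S" if "x \<in> T closure_of S" for c x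
    using cl_inv1[OF vt_scale[OF vt _ cmap_ident], of "\<lambda>_. c" S x] that sub by (simp add: subspace_def)
  moreover have "mixed_sup le sle x y \<in> T closure_of S" if "x \<in> T closure_of S" "y \<in> T closure_of S" for x y
    using cl_inv2[OF tm_sup[OF tm c_fst c_snd] _ that] cl by simp
  moreover have "mixed_inf le sle x y \<in> T closure_of S" if "x \<in> T closure_of S" "y \<in> T closure_of S" for x y
    using cl_inv2[OF tm_inf[OF tm c_fst c_snd] _ that] cl by simp
  ultimately show ?thesis by (simp add: mixed_lattice_subspace_def subspace_def)
qed

lemma part_g1:
  assumes tm: "top_mixed_lattice_space le sle T" and A: "quasi_ideal le sle A"
  shows "quasi_ideal le sle (T closure_of A)"
proof -
  have vt: "vector_topology T" using tm by (rule tm_vt)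
  have m: "mixed_lattice_vs le sle" using tm by (rule tm_ml)
  have o: "ordered_vs le" "ordered_vs sle" using m by (simp_all add: ml_le ml_sle)
  have mA: "mixed_lattice_subspace le sle A" and qA: "\<And>x y. x \<in> A \<Longrightarrow> sle 0 y \<Longrightarrow> le y x \<Longrightarrow> y \<in> A"
    using A by (auto simp: quasi_ideal_def)
  have A0: "0 \<in> A" and As: "\<And>x y. x \<in> A \<Longrightarrow> y \<in> A \<Longrightarrow> mixed_sup le sle x y \<in> A"
    using mA by (auto simp: mixed_lattice_subspace_def subspace_def)
  have "y \<in> T closure_of A" if x: "x \<in> T closure_of A" and y0: "sle 0 y" and yx: "le y x" for x y
  proof -
    define h where "h a = mixed_inf le sle y (mixed_sup le sle 0 a)" for a
    have hc: "continuous_map T T h" unfolding h_def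
      by (intro tm_inf[OF tm] tm_sup[OF tm] vt_const[OF vt] cmap_ident)
    have "h a \<in> A" if a: "a \<in> A" for a
    proof -
      let ?a = "mixed_sup le sle 0 a"
      have a1: "?a \<in> A" using As[OF A0 a] .
      have a2: "sle 0 ?a" using ml_sup_props(1)[OF m] .
      have "sle 0 (h a)" unfolding h_def using ml_ax3[OF m y0 a2] by simp
      moreover have "le (h a) ?a" unfolding h_def by (rule ml_inf_props(2)[OF m])
      ultimately show ?thesis using qA[OF a1] by blast
    qed
    then have "h x \<in> T closure_of A" using cl_inv1[OF hc _ x] by blast
    moreover have "h x = y"
    proof -
      let ?x = "mixed_sup le sle 0 x"
      have "le x ?x" by (rule ml_sup_props(2)[OF m])
      then have "le y ?x" using ov_trans[OF o(1) yx] by blast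
      then have "le y (h x)" unfolding h_def using ml_inf_props(3)[OF m, of y y] ov_refl[OF o(2)] by blast
      moreover have "le (h x) y" unfolding h_def using ml_sle_le[OF m ml_inf_props(1)[OF m]] .
      ultimately show ?thesis using ov_antisym[OF o(1)] by blast
    qed
    ultimately show ?thesis by simp
  qed
  then show ?thesis using part_f[OF tm mA] by (auto simp: quasi_ideal_def)
qed

lemma part_g2:
  assumes tm: "top_mixed_lattice_space le sle T" and A: "specific_ideal le sle A"
  shows "specific_ideal le sle (T closure_of A)"
proof -
  have vt: "vector_topology T" using tm by (rule tm_vt)
  have m: "mixed_lattice_vs le sle" using tm by (rule tm_ml)
  have o: "ordered_vs le" "ordered_vs sle" using m by (simp_all add: ml_le ml_sle)
  have mA: "mixed_lattice_subspace le sle A" and qA: "\<And>x y. x \<in> A \<Longrightarrow> sle 0 y \<Longrightarrow> sle y x \<Longrightarrow> y \<in> A"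
    using A by (auto simp: specific_ideal_def)
  have A0: "0 \<in> A" and As: "\<And>x y. x \<in> A \<Longrightarrow> y \<in> A \<Longrightarrow> mixed_sup le sle x y \<in> A"
    using mA by (auto simp: mixed_lattice_subspace_def subspace_def)
  have "y \<in> T closure_of A" if x: "x \<in> T closure_of A" and y0: "sle 0 y" and yx: "sle y x" for x y
  proof -
    define h where "h a = mixed_inf le sle (mixed_sup le sle 0 a) y" for a
    have hc: "continuous_map T T h" unfolding h_def
      by (intro tm_inf[OF tm] tm_sup[OF tm] vt_const[OF vt] cmap_ident)
    have "h a \<in> A" if a: "a \<in> A" for a
    proof -
      let ?a = "mixed_sup le sle 0 a"
      have a1: "?a \<in> A" using As[OF A0 a] .
      have a2: "sle 0 ?a" using ml_sup_props(1)[OF m] .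
      have "sle 0 (h a)" unfolding h_def using ml_ax3[OF m a2 y0] by simp
      moreover have "sle (h a) ?a" unfolding h_def by (rule ml_inf_props(1)[OF m])
      ultimately show ?thesis using qA[OF a1] by blast
    qed
    then have "h x \<in> T closure_of A" using cl_inv1[OF hc _ x] by blast
    moreover have "h x = y"
    proof -
      let ?x = "mixed_sup le sle 0 x"
      have x0: "sle 0 x" using ov_trans[OF o(2) y0 yx] .
      have "le ?x x" using ml_sup_props(3)[OF m x0 ov_refl[OF o(1)]] .
      moreover have "le x ?x" by (rule ml_sup_props(2)[OF m])
      ultimately have xx: "?x = x" using ov_antisym[OF o(1)] by blast
      have "le y (h x)" unfolding h_def xx using ml_inf_props(3)[OF m yx ov_refl[OF o(1)]] .
      moreover have "le (h x) y" unfolding h_def by (rule ml_inf_props(2)[OF m])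
      ultimately show ?thesis using ov_antisym[OF o(1)] by blast
    qed
    ultimately show ?thesis by simp
  qed
  then show ?thesis using part_f[OF tm mA] by (auto simp: specific_ideal_def)
qed

section \<open>Cones and Hausdorff\<close>

lemma le_cone_eq:
  assumes m: "mixed_lattice_vs le sle"
  shows "le 0 x \<longleftrightarrow> mixed_sup le sle x 0 = x"
proof
  have o: "ordered_vs le" "ordered_vs sle" using m by (simp_all add: ml_le ml_sle)
  assume h: "le 0 x"
  have "le (mixed_sup le sle x 0) x" using ml_sup_props(3)[OF m ov_refl[OF o(2)] h] .
  moreover have "le x (mixed_sup le sle x 0)" using ml_sle_le[OF m ml_sup_props(1)[OF m]] .
  ultimately show "mixed_sup le sle x 0 = x" using ov_antisym[OF o(1)] by blast
next
  assume "mixed_sup le sle x 0 = x"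
  then show "le 0 x" using ml_sup_props(2)[OF m, of 0 x] by simp
qed

lemma sle_cone_eq:
  assumes m: "mixed_lattice_vs le sle"
  shows "sle 0 x \<longleftrightarrow> mixed_sup le sle 0 x = x"
proof
  have o: "ordered_vs le" "ordered_vs sle" using m by (simp_all add: ml_le ml_sle)
  assume h: "sle 0 x"
  have "le (mixed_sup le sle 0 x) x" using ml_sup_props(3)[OF m h ov_refl[OF o(1)]] .
  moreover have "le x (mixed_sup le sle 0 x)" using ml_sup_props(2)[OF m] .
  ultimately show "mixed_sup le sle 0 x = x" using ov_antisym[OF o(1)] by blast
next
  assume "mixed_sup le sle 0 x = x"
  then show "sle 0 x" using ml_sup_props(1)[OF m, of 0 x] by simp
qed

lemma cones_closed:
  assumes tm: "top_mixed_lattice_space le sle T" and H: "Hausdorff_space T"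
  shows "closedin T {x. le 0 x}" "closedin T {x. sle 0 x}"
proof -
  have vt: "vector_topology T" using tm by (rule tm_vt)
  have m: "mixed_lattice_vs le sle" using tm by (rule tm_ml)
  have "closedin T {x \<in> topspace T. mixed_sup le sle x 0 = id x}"
    by (intro closedin_continuous_maps_eq[OF H] tm_sup[OF tm] continuous_map_id cmap_ident vt_const[OF vt])
  then show "closedin T {x. le 0 x}" using le_cone_eq[OF m] by (simp add: vt_top[OF vt])
  have "closedin T {x \<in> topspace T. mixed_sup le sle 0 x = id x}"
    by (intro closedin_continuous_maps_eq[OF H] tm_sup[OF tm] continuous_map_id cmap_ident vt_const[OF vt])
  then show "closedin T {x. sle 0 x}" using sle_cone_eq[OF m] by (simp add: vt_top[OF vt])
qed

lemma vt_closed_preimage: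
  assumes vt: "vector_topology T" and f: "continuous_map T T f" and U: "closedin T U"
  shows "closedin T {x. f x \<in> U}"
  using closedin_continuous_map_preimage[OF f U] by (simp add: vt_top[OF vt])

lemma closed_cone_Hausdorff:
  assumes tm: "top_mixed_lattice_space le sle T" and C: "closedin T {x. le 0 x}"
  shows "Hausdorff_space T"
proof -
  have vt: "vector_topology T" using tm by (rule tm_vt)
  have m: "mixed_lattice_vs le sle" using tm by (rule tm_ml)
  have o: "ordered_vs le" using m by (simp add: ml_le)
  have "closedin T {x. - x \<in> {x. le 0 x}}"
  proof (intro vt_closed_preimage[OF vt _ C])
    have "continuous_map T T (\<lambda>x. (-1) *\<^sub>R x)" by (intro vt_scale[OF vt] cmap_ident) simp
    then show "continuous_map T T uminus" by (simp add: fun_eq_iff)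
  qed
  moreover have "{x. - x \<in> {x. le 0 x}} = {x. le x 0}"
  proof -
    have "le x 0 \<longleftrightarrow> le 0 (- x)" for x using ov_sub[OF o, of x 0] by simp
    then show ?thesis by blast
  qed
  ultimately have "closedin T ({x. le 0 x} \<inter> {x. le x 0})" using C by auto
  moreover have "{x. le 0 x} \<inter> {x. le x 0} = {0}" using ov_antisym[OF o] ov_refl[OF o] by auto
  ultimately have C0: "closedin T {0}" by simp
  have Cp: "closedin T {p}" for p
  proof -
    have "closedin T {x. x - p \<in> {0}}"
      by (intro vt_closed_preimage[OF vt _ C0] vt_diff[OF vt cmap_ident vt_const[OF vt]])
    then show ?thesis by simp
  qed
  show ?thesis unfolding Hausdorff_space_def
  proof (intro allI impI)
    fix x y assume "x \<in> topspace T \<and> y \<in> topspace T \<and> x \<noteq> y"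
    then have xy: "x \<noteq> y" by simp
    have "openin T (topspace T - {x - y})" using Cp[of "x - y"] by (simp add: closedin_def)
    then have "openin T (UNIV - {x - y})" by (simp add: vt_top[OF vt])
    then obtain V where V: "openin T V" "0 \<in> V" "\<forall>a\<in>V. \<forall>b\<in>V. a - b \<in> UNIV - {x - y}"
      using vt_diff_nbhd[OF vt, of "UNIV - {x - y}"] xy by auto
    have oU: "openin T {p. p - x \<in> V}" and oW: "openin T {p. p - y \<in> V}"
      by (intro vt_open_preimage[OF vt vt_diff[OF vt cmap_ident vt_const[OF vt]] V(1)])+
    have "disjnt {p. p - x \<in> V} {p. p - y \<in> V}"
    proof -
      have False if "p - x \<in> V" "p - y \<in> V" for p
      proof -
        have "(p - y) - (p - x) \<in> UNIV - {x - y}" using V(3) that by blast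
        moreover have "(p - y) - (p - x) = x - y" by simp
        ultimately show False by simp
      qed
      then show ?thesis by (auto simp: disjnt_def)
    qed
    then show "\<exists>U V. openin T U \<and> openin T V \<and> x \<in> U \<and> y \<in> V \<and> disjnt U V"
      using oU oW V(2) by (intro exI[of _ "{p. p - x \<in> V}"] exI[of _ "{p. p - y \<in> V}"]) auto
  qed
qed


lemma vt_neg: "vector_topology T \<Longrightarrow> continuous_map T T uminus"
proof -
  assume vt: "vector_topology T"
  have "continuous_map T T (\<lambda>x. (-1) *\<^sub>R x)" by (intro vt_scale[OF vt] cmap_ident) simp
  then show "continuous_map T T uminus" by (simp add: fun_eq_iff)
qed

section \<open>Sequences\<close>

lemma inc_sup:
  assumes vt: "vector_topology T" and o: "ordered_vs r" and C: "closedin T {x. r 0 x}"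
    and inc: "\<forall>n m. n \<le> m \<longrightarrow> r (xs n) (xs m)" and lim: "limitin T xs x sequentially"
  shows "is_sup_wrt r (range xs) x"
proof -
  have ub: "r (xs n) x" for n
  proof -
    have l: "limitin T ((\<lambda>p. p - xs n) \<circ> xs) (x - xs n) sequentially"
      using continuous_map_limit[OF vt_diff[OF vt cmap_ident vt_const[OF vt]] lim] .
    have "eventually (\<lambda>m. ((\<lambda>p. p - xs n) \<circ> xs) m \<in> {x. r 0 x}) sequentially"
      unfolding eventually_sequentially
    proof (intro exI[of _ n] allI impI)
      fix m assume "n \<le> m"
      then have "r (xs n) (xs m)" using inc by blast
      then show "((\<lambda>p. p - xs n) \<circ> xs) m \<in> {x. r 0 x}" using ov_sub[OF o, of "xs n" "xs m"] by simp
    qed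
    then have "x - xs n \<in> {x. r 0 x}" using limitin_closedin[OF l C] by simp
    then show ?thesis using ov_sub[OF o, of "xs n" x] by simp
  qed
  have least: "r x u" if u: "\<forall>s\<in>range xs. r s u" for u
  proof -
    have l: "limitin T ((\<lambda>p. u - p) \<circ> xs) (u - x) sequentially"
      using continuous_map_limit[OF vt_diff[OF vt vt_const[OF vt] cmap_ident] lim] .
    have "eventually (\<lambda>m. ((\<lambda>p. u - p) \<circ> xs) m \<in> {x. r 0 x}) sequentially"
      unfolding eventually_sequentially
    proof (intro exI[of _ 0] allI impI)
      fix m
      have "r (xs m) u" using u by blast
      then show "((\<lambda>p. u - p) \<circ> xs) m \<in> {x. r 0 x}" using ov_sub[OF o, of "xs m" u] by simp
    qed
    then have "u - x \<in> {x. r 0 x}" using limitin_closedin[OF l C] by simp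
    then show ?thesis using ov_sub[OF o, of x u] by simp
  qed
  show ?thesis unfolding is_sup_wrt_def is_least_wrt_def using ub least by blast
qed

lemma arch:
  assumes vt: "vector_topology T" and o: "ordered_vs le" and C: "closedin T {x. le 0 x}"
  shows "archimedean_wrt le"
  unfolding archimedean_wrt_def
proof (intro allI impI)
  fix x y assume h: "\<forall>n::nat. n \<ge> 1 \<longrightarrow> le (real n *\<^sub>R x) y"
  define f where "f t = t *\<^sub>R y - x" for t
  have fc: "continuous_map euclideanreal T f" unfolding f_def
    by (intro vt_diff[OF vt] vt_scale[OF vt] cmap_ident vt_const[OF vt])
  have "limitin euclideanreal (\<lambda>n. 1 / real n) 0 sequentially" using lim_1_over_n by simp
  from continuous_map_limit[OF fc this]
  have l: "limitin T (f \<circ> (\<lambda>n. 1 / real n)) (f 0) sequentially" .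
  have "eventually (\<lambda>n. (f \<circ> (\<lambda>n. 1 / real n)) n \<in> {x. le 0 x}) sequentially"
    unfolding eventually_sequentially
  proof (intro exI[of _ 1] allI impI)
    fix n :: nat assume n: "1 \<le> n"
    then have "le (real n *\<^sub>R x) y" using h by blast
    then have "le 0 (y - real n *\<^sub>R x)" using ov_sub[OF o, of "real n *\<^sub>R x" y] by simp
    from ov_scale[OF o this, of "1 / real n"]
    have "le 0 ((1 / real n) *\<^sub>R (y - real n *\<^sub>R x))" by simp
    moreover have "(1 / real n) *\<^sub>R (y - real n *\<^sub>R x) = f (1 / real n)"
      using n by (simp add: f_def scaleR_diff_right)
    ultimately show "(f \<circ> (\<lambda>n. 1 / real n)) n \<in> {x. le 0 x}" by simp
  qed
  then have "f 0 \<in> {x. le 0 x}" using limitin_closedin[OF l C] by simp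
  then show "le x 0" using ov_sub[OF o, of x 0] by (simp add: f_def)
qed

section \<open>Boundedness\<close>

lemma bnd_get:
  assumes A: "tvs_bounded T A" and N: "nbhd_of T 0 N"
  shows "\<exists>c>0. \<forall>a\<in>A. (1/c) *\<^sub>R a \<in> N"
proof -
  obtain c where c: "c > 0" "A \<subseteq> (\<lambda>x. c *\<^sub>R x) ` N" using A N unfolding tvs_bounded_def by blast
  have "(1/c) *\<^sub>R a \<in> N" if aA: "a \<in> A" for a
  proof -
    obtain b where "b \<in> N" "a = c *\<^sub>R b" using c(2) aA by blast
    then show ?thesis using c(1) by simp
  qed
  then show ?thesis using c(1) by blast
qed

lemma bnd_put:
  assumes h: "\<And>N. nbhd_of T 0 N \<Longrightarrow> \<exists>c>0. \<forall>a\<in>A. (1/c) *\<^sub>R a \<in> N"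
  shows "tvs_bounded T A"
  unfolding tvs_bounded_def
proof (intro allI impI)
  fix N assume "nbhd_of T 0 N"
  then obtain c where c: "c > 0" "\<forall>a\<in>A. (1/c) *\<^sub>R a \<in> N" using h by blast
  have "a \<in> (\<lambda>x. c *\<^sub>R x) ` N" if "a \<in> A" for a
  proof (rule image_eqI)
    show "a = c *\<^sub>R ((1/c) *\<^sub>R a)" using c(1) by simp
    show "(1/c) *\<^sub>R a \<in> N" using c(2) that by blast
  qed
  then show "\<exists>c>0. A \<subseteq> (\<lambda>x. c *\<^sub>R x) ` N" using c(1) by blast
qed

lemma bnd_subset: "tvs_bounded T B \<Longrightarrow> A \<subseteq> B \<Longrightarrow> tvs_bounded T A"
  unfolding tvs_bounded_def by blast

lemma bnd_pair:
  assumes vt: "vector_topology T"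
  shows "tvs_bounded T {p, q}"
proof (rule bnd_put)
  fix N assume "nbhd_of T 0 N"
  then obtain U where U: "openin T U" "0 \<in> U" "U \<subseteq> N" unfolding nbhd_of_def by blast
  obtain d1 where d1: "d1 > 0" "\<forall>t. \<bar>t\<bar> < d1 \<longrightarrow> t *\<^sub>R p \<in> U" using vt_scale_small[OF vt U(1,2)] by blast
  obtain d2 where d2: "d2 > 0" "\<forall>t. \<bar>t\<bar> < d2 \<longrightarrow> t *\<^sub>R q \<in> U" using vt_scale_small[OF vt U(1,2)] by blast
  define c where "c = 2 / min d1 d2"
  have c0: "c > 0" using d1 d2 by (simp add: c_def)
  have "1 / c = min d1 d2 / 2" by (simp add: c_def)
  then have "\<bar>1/c\<bar> < d1" "\<bar>1/c\<bar> < d2" using d1 d2 by auto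
  then have "(1/c) *\<^sub>R p \<in> N" "(1/c) *\<^sub>R q \<in> N" using d1 d2 U(3) by blast+
  then show "\<exists>c>0. \<forall>a\<in>{p, q}. (1/c) *\<^sub>R a \<in> N" using c0 by blast
qed

lemma part_d:
  assumes tm: "top_mixed_lattice_space le sle T" and lmf: "locally_mixed_full le sle T"
    and A: "tvs_bounded T A"
  shows "tvs_bounded T (MF1 le sle A) \<and> tvs_bounded T (MF2 le sle A)"
proof -
  have vt: "vector_topology T" using tm by (rule tm_vt)
  have m: "mixed_lattice_vs le sle" using tm by (rule tm_ml)
  have ol: "ordered_vs le" and os: "ordered_vs sle" using m by (simp_all add: ml_le ml_sle)
  have main: "\<exists>c>0. (\<forall>y\<in>MF1 le sle A. (1/c) *\<^sub>R y \<in> N) \<and> (\<forall>y\<in>MF2 le sle A. (1/c) *\<^sub>R y \<in> N)"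
    if N: "nbhd_of T 0 N" for N
  proof -
    obtain U where U: "openin T U" "0 \<in> U" "U \<subseteq> N" using N unfolding nbhd_of_def by blast
    obtain N1 where N1: "openin T N1" "0 \<in> N1" "\<forall>a\<in>N1. \<forall>b\<in>N1. a + b \<in> U"
      using vt_add_nbhd[OF vt U(1,2)] by blast
    define N2 where "N2 = N1 \<inter> {x. - x \<in> N1}"
    have "openin T {x. - x \<in> N1}" using vt_open_preimage[OF vt vt_neg[OF vt] N1(1)] .
    then have "openin T N2" unfolding N2_def using N1(1) by (simp add: openin_Int)
    moreover have "0 \<in> N2" unfolding N2_def using N1(2) by simp
    ultimately have "nbhd_of T 0 N2" unfolding nbhd_of_def by blast
    then obtain W where W: "nbhd_of T 0 W" "W \<subseteq> N2" "\<forall>x y. y \<in> W \<and> sle 0 x \<and> le x y \<longrightarrow> x \<in> W"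
      using lmf unfolding locally_mixed_full_def by meson
    obtain W0 where W0: "openin T W0" "0 \<in> W0" "W0 \<subseteq> W" using W(1) unfolding nbhd_of_def by blast
    obtain W2 where W2: "openin T W2" "0 \<in> W2" "\<forall>a\<in>W2. \<forall>b\<in>W2. a - b \<in> W0"
      using vt_diff_nbhd[OF vt W0(1,2)] by blast
    have "openin T (W2 \<inter> N1)" using W2(1) N1(1) by (rule openin_Int)
    then have "nbhd_of T 0 (W2 \<inter> N1)" unfolding nbhd_of_def using W2(2) N1(2) by blast
    then obtain c where c: "c > 0" "\<forall>a\<in>A. (1/c) *\<^sub>R a \<in> W2 \<inter> N1" using bnd_get[OF A] by meson
    define k where "k = 1 / c"
    have k0: "0 \<le> k" using c(1) by (simp add: k_def)
    have cA: "k *\<^sub>R a \<in> W2" "k *\<^sub>R a \<in> N1" if "a \<in> A" for a using c(2) that by (auto simp: k_def)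
    have key: "k *\<^sub>R v \<in> N2" if v: "sle 0 v" "le v (z - x)" and xz: "x \<in> A" "z \<in> A" for v x z
    proof -
      have "k *\<^sub>R z - k *\<^sub>R x \<in> W0" using W2(3) cA(1)[OF xz(1)] cA(1)[OF xz(2)] by blast
      then have "k *\<^sub>R z - k *\<^sub>R x \<in> W" using W0(3) by blast
      then have zw: "k *\<^sub>R (z - x) \<in> W" by (simp add: scaleR_diff_right)
      have "sle 0 (k *\<^sub>R v)" using ov_scale[OF os v(1) k0] by simp
      moreover have "le (k *\<^sub>R v) (k *\<^sub>R (z - x))" using ov_scale[OF ol v(2) k0] .
      ultimately have "k *\<^sub>R v \<in> W" using W(3) zw by meson
      then show ?thesis using W(2) by blast
    qed
    have "k *\<^sub>R y \<in> N" if y: "y \<in> MF1 le sle A" for y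
    proof -
      obtain x z where xz: "x \<in> A" "z \<in> A" "sle x y" "le y z" using y unfolding MF1_def by blast
      have v1: "sle 0 (y - x)" using ov_sub[OF os, of x y] xz(3) by simp
      have "le (y + - x) (z + - x)" using ov_add[OF ol xz(4)] .
      then have v2: "le (y - x) (z - x)" by simp
      have "k *\<^sub>R (y - x) \<in> N1" using key[OF v1 v2 xz(1,2)] unfolding N2_def by blast
      moreover have "k *\<^sub>R x \<in> N1" using cA(2)[OF xz(1)] .
      ultimately have "k *\<^sub>R x + k *\<^sub>R (y - x) \<in> U" using N1(3) by blast
      then have "k *\<^sub>R y \<in> U" by (simp add: scaleR_diff_right)
      then show ?thesis using U(3) by blast
    qed
    moreover have "k *\<^sub>R y \<in> N" if y: "y \<in> MF2 le sle A" for y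
    proof -
      obtain x z where xz: "x \<in> A" "z \<in> A" "le x y" "sle y z" using y unfolding MF2_def by blast
      have v1: "sle 0 (z - y)" using ov_sub[OF os, of y z] xz(4) by simp
      have "le 0 (y - x)" using ov_sub[OF ol, of x y] xz(3) by simp
      moreover have "(z - x) - (z - y) = y - x" by simp
      ultimately have v2: "le (z - y) (z - x)" using ov_sub[OF ol, of "z - y" "z - x"] by simp
      have "- (k *\<^sub>R (z - y)) \<in> N1" using key[OF v1 v2 xz(1,2)] unfolding N2_def by blast
      moreover have "k *\<^sub>R z \<in> N1" using cA(2)[OF xz(2)] .
      ultimately have "k *\<^sub>R z + - (k *\<^sub>R (z - y)) \<in> U" using N1(3) by blast
      then have "k *\<^sub>R y \<in> U" by (simp add: scaleR_diff_right)
      then show ?thesis using U(3) by blast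
    qed
    ultimately have "(\<forall>y\<in>MF1 le sle A. (1/c) *\<^sub>R y \<in> N) \<and> (\<forall>y\<in>MF2 le sle A. (1/c) *\<^sub>R y \<in> N)"
      unfolding k_def by blast
    then show ?thesis using c(1) by blast
  qed
  show ?thesis
  proof
    show "tvs_bounded T (MF1 le sle A)"
    proof (rule bnd_put)
      fix N assume "nbhd_of T 0 N"
      from main[OF this] show "\<exists>c>0. \<forall>a\<in>MF1 le sle A. (1/c) *\<^sub>R a \<in> N" by blast
    qed
    show "tvs_bounded T (MF2 le sle A)"
    proof (rule bnd_put)
      fix N assume "nbhd_of T 0 N"
      from main[OF this] show "\<exists>c>0. \<forall>a\<in>MF2 le sle A. (1/c) *\<^sub>R a \<in> N" by blast
    qed
  qed
qed

lemma part_e: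
  assumes tm: "top_mixed_lattice_space le sle T" and lmf: "locally_mixed_full le sle T"
  shows "tvs_bounded T {x. sle z x \<and> le x y} \<and> tvs_bounded T {x. le z x \<and> sle x y}
                 \<and> tvs_bounded T {x. sle z x \<and> sle x y}"
proof -
  have vt: "vector_topology T" using tm by (rule tm_vt)
  have m: "mixed_lattice_vs le sle" using tm by (rule tm_ml)
  have b: "tvs_bounded T (MF1 le sle {z, y})" "tvs_bounded T (MF2 le sle {z, y})"
    using part_d[OF tm lmf bnd_pair[OF vt]] by auto
  have s1: "{x. sle z x \<and> le x y} \<subseteq> MF1 le sle {z, y}" unfolding MF1_def by blast
  have s2: "{x. le z x \<and> sle x y} \<subseteq> MF2 le sle {z, y}" unfolding MF2_def by blast
  have s3: "{x. sle z x \<and> sle x y} \<subseteq> MF1 le sle {z, y}" unfolding MF1_def using ml_sle_le[OF m] by blast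
  show ?thesis using bnd_subset[OF b(1) s1] bnd_subset[OF b(2) s2] bnd_subset[OF b(1) s3] by blast
qed

theorem theorem3p16:
  fixes le sle :: "'a::real_vector \<Rightarrow> 'a \<Rightarrow> bool" and T :: "'a topology"
  assumes "top_mixed_lattice_space le sle T"
  shows
    "((closedin T {x. le 0 x} \<and> closedin T {x. sle 0 x}) \<longleftrightarrow> Hausdorff_space T)
     \<and> (Hausdorff_space T \<longrightarrow> archimedean_wrt le)
     \<and> (Hausdorff_space T \<longrightarrow>
          (\<forall>xs x. (\<forall>n m. n \<le> m \<longrightarrow> le (xs n) (xs m)) \<and> limitin T xs x sequentially
                  \<longrightarrow> is_sup_wrt le (range xs) x)
        \<and> (\<forall>xs x. (\<forall>n m. n \<le> m \<longrightarrow> sle (xs n) (xs m)) \<and> limitin T xs x sequentially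
                  \<longrightarrow> is_sup_wrt sle (range xs) x))
     \<and> (locally_mixed_full le sle T \<longrightarrow>
          (\<forall>A. tvs_bounded T A \<longrightarrow> tvs_bounded T (MF1 le sle A) \<and> tvs_bounded T (MF2 le sle A)))
     \<and> (locally_mixed_full le sle T \<longrightarrow>
          (\<forall>z y. tvs_bounded T {x. sle z x \<and> le x y} \<and> tvs_bounded T {x. le z x \<and> sle x y}
                 \<and> tvs_bounded T {x. sle z x \<and> sle x y}))
     \<and> (\<forall>S. mixed_lattice_subspace le sle S \<longrightarrow> mixed_lattice_subspace le sle (T closure_of S))
     \<and> (\<forall>A. quasi_ideal le sle A \<longrightarrow> quasi_ideal le sle (T closure_of A))
     \<and> (\<forall>A. specific_ideal le sle A \<longrightarrow> specific_ideal le sle (T closure_of A))"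
proof -
  note tm = assms
  have vt: "vector_topology T" using tm by (rule tm_vt)
  have m: "mixed_lattice_vs le sle" using tm by (rule tm_ml)
  have ol: "ordered_vs le" and os: "ordered_vs sle" using m by (simp_all add: ml_le ml_sle)
  have a: "(closedin T {x. le 0 x} \<and> closedin T {x. sle 0 x}) \<longleftrightarrow> Hausdorff_space T"
    using closed_cone_Hausdorff[OF tm] cones_closed[OF tm] by meson
  have b: "Hausdorff_space T \<longrightarrow> archimedean_wrt le"
    using arch[OF vt ol] cones_closed(1)[OF tm] by blast
  have c: "Hausdorff_space T \<longrightarrow>
          (\<forall>xs x. (\<forall>n m. n \<le> m \<longrightarrow> le (xs n) (xs m)) \<and> limitin T xs x sequentially
                  \<longrightarrow> is_sup_wrt le (range xs) x)
        \<and> (\<forall>xs x. (\<forall>n m. n \<le> m \<longrightarrow> sle (xs n) (xs m)) \<and> limitin T xs x sequentially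
                  \<longrightarrow> is_sup_wrt sle (range xs) x)"
    using inc_sup[OF vt ol cones_closed(1)[OF tm]] inc_sup[OF vt os cones_closed(2)[OF tm]] by blast
  show ?thesis
  proof (intro conjI)
    show "(closedin T {x. le 0 x} \<and> closedin T {x. sle 0 x}) \<longleftrightarrow> Hausdorff_space T" by (rule a)
    show "Hausdorff_space T \<longrightarrow> archimedean_wrt le" by (rule b)
    show "Hausdorff_space T \<longrightarrow>
          (\<forall>xs x. (\<forall>n m. n \<le> m \<longrightarrow> le (xs n) (xs m)) \<and> limitin T xs x sequentially
                  \<longrightarrow> is_sup_wrt le (range xs) x)
        \<and> (\<forall>xs x. (\<forall>n m. n \<le> m \<longrightarrow> sle (xs n) (xs m)) \<and> limitin T xs x sequentially
                  \<longrightarrow> is_sup_wrt sle (range xs) x)" by (rule c)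
    show "locally_mixed_full le sle T \<longrightarrow>
          (\<forall>A. tvs_bounded T A \<longrightarrow> tvs_bounded T (MF1 le sle A) \<and> tvs_bounded T (MF2 le sle A))"
      using part_d[OF tm] by blast
    show "locally_mixed_full le sle T \<longrightarrow>
          (\<forall>z y. tvs_bounded T {x. sle z x \<and> le x y} \<and> tvs_bounded T {x. le z x \<and> sle x y}
                 \<and> tvs_bounded T {x. sle z x \<and> sle x y})"
      using part_e[OF tm] by blast
    show "\<forall>S. mixed_lattice_subspace le sle S \<longrightarrow> mixed_lattice_subspace le sle (T closure_of S)"
      using part_f[OF tm] by blast
    show "\<forall>A. quasi_ideal le sle A \<longrightarrow> quasi_ideal le sle (T closure_of A)"
      using part_g1[OF tm] by blast
    show "\<forall>A. specific_ideal le sle A \<longrightarrow> specific_ideal le sle (T closure_of A)"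
      using part_g2[OF tm] by blast
  qed
qed

end
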